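(* Let $R_{n,d}$ be a $d$-regular simple graph on $n$ vertices. Then $m(R_{n,d})=\frac{n}{d+1}$.
   Context: For a simple graph $G$ with adjacency matrix $A$, $\mathrm{SOL}(G)$ is the set of $x\in\mathbb{R}^n$ with $x\geq 0$, $(A+I)x\geq\mathbf{e}$ and $x^\top((A+I)x-\mathbf{e})=0$ ($I$ identity, $\mathbf{e}$ all-ones), and $m(G):=\min\{\mathbf{e}^\top x\mid x\in\mathrm{SOL}(G)\}$. *)

theory Defs
  imports Complex_Main
begin

definition simple_graph :: "'a set \<Rightarrow> ('a \<Rightarrow> 'a \<Rightarrow> bool) \<Rightarrow> bool" where
  "simple_graph V E \<longleftrightarrow> finite V \<and> (\<forall>u v. E u v \<longrightarrow> u \<in> V \<and> v \<in> V)
     \<and> (\<forall>u v. E u v \<longrightarrow> E v u) \<and> (\<forall>v. \<not> E v v)"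

definition regular :: "'a set \<Rightarrow> ('a \<Rightarrow> 'a \<Rightarrow> bool) \<Rightarrow> nat \<Rightarrow> bool" where
  "regular V E d \<longleftrightarrow> (\<forall>v\<in>V. card {u\<in>V. E v u} = d)"

definition adj :: "('a \<Rightarrow> 'a \<Rightarrow> bool) \<Rightarrow> 'a \<Rightarrow> 'a \<Rightarrow> real" where
  "adj E u v = (if E u v then 1 else 0)"

definition AIx :: "'a set \<Rightarrow> ('a \<Rightarrow> 'a \<Rightarrow> bool) \<Rightarrow> ('a \<Rightarrow> real) \<Rightarrow> 'a \<Rightarrow> real" where
  "AIx V E x v = (\<Sum>u\<in>V. (adj E v u + (if u = v then 1 else 0)) * x u)"

text \<open>Vectors in R^V are functions vanishing outside V.\<close>
definition SOL :: "'a set \<Rightarrow> ('a \<Rightarrow> 'a \<Rightarrow> bool) \<Rightarrow> ('a \<Rightarrow> real) set" where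
  "SOL V E = {x. (\<forall>v. v \<notin> V \<longrightarrow> x v = 0)
               \<and> (\<forall>v\<in>V. x v \<ge> 0)
               \<and> (\<forall>v\<in>V. AIx V E x v \<ge> 1)
               \<and> (\<Sum>v\<in>V. x v * (AIx V E x v - 1)) = 0}"

definition mG :: "'a set \<Rightarrow> ('a \<Rightarrow> 'a \<Rightarrow> bool) \<Rightarrow> real" where
  "mG V E = (LEAST s. s \<in> (\<lambda>x. \<Sum>v\<in>V. x v) ` SOL V E)"

end

theory Submission
  imports Defs
begin

lemma deg_sum:
  assumes g: "simple_graph V E" and r: "regular V E d" and v: "v \<in> V"
  shows "(\<Sum>u\<in>V. adj E v u) = real d"
proof -
  have fin: "finite V" using g by (simp add: simple_graph_def)
  have "(\<Sum>u\<in>V. adj E v u) = (\<Sum>u\<in>V. if E v u then 1 else 0)" by (simp add: adj_def)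
  also have "\<dots> = (\<Sum>u\<in>{u\<in>V. E v u}. 1)" using fin by (rule sum.inter_filter[symmetric])
  also have "\<dots> = real (card {u\<in>V. E v u})" by simp
  also have "\<dots> = real d" using r v by (simp add: regular_def)
  finally show ?thesis .
qed

lemma col_sum:
  assumes g: "simple_graph V E" and r: "regular V E d" and u: "u \<in> V"
  shows "(\<Sum>v\<in>V. adj E v u + (if u = v then 1 else 0)) = real d + 1"
proof -
  have fin: "finite V" using g by (simp add: simple_graph_def)
  have sym: "\<And>v. adj E v u = adj E u v" using g by (auto simp: simple_graph_def adj_def)
  have "(\<Sum>v\<in>V. adj E v u + (if u = v then 1 else 0)) = (\<Sum>v\<in>V. adj E u v) + (\<Sum>v\<in>V. (if u = v then 1 else 0))"
    by (simp add: sum.distrib sym)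
  also have "\<dots> = real d + 1" using deg_sum[OF g r u] fin u by simp
  finally show ?thesis .
qed

lemma row_sum:
  assumes g: "simple_graph V E" and r: "regular V E d" and v: "v \<in> V"
  shows "(\<Sum>u\<in>V. adj E v u + (if u = v then 1 else 0)) = real d + 1"
proof -
  have fin: "finite V" using g by (simp add: simple_graph_def)
  have "(\<Sum>u\<in>V. adj E v u + (if u = v then 1 else 0)) = (\<Sum>u\<in>V. adj E v u) + (\<Sum>u\<in>V. (if u = v then 1 else 0))"
    by (simp add: sum.distrib)
  also have "\<dots> = real d + 1" using deg_sum[OF g r v] fin v by simp
  finally show ?thesis .
qed

lemma total:
  assumes g: "simple_graph V E" and r: "regular V E d"
  shows "(\<Sum>v\<in>V. AIx V E x v) = (real d + 1) * (\<Sum>u\<in>V. x u)"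
proof -
  have "(\<Sum>v\<in>V. AIx V E x v) = (\<Sum>v\<in>V. \<Sum>u\<in>V. (adj E v u + (if u = v then 1 else 0)) * x u)"
    by (simp add: AIx_def)
  also have "\<dots> = (\<Sum>u\<in>V. \<Sum>v\<in>V. (adj E v u + (if u = v then 1 else 0)) * x u)"
    by (rule sum.swap)
  also have "\<dots> = (\<Sum>u\<in>V. (\<Sum>v\<in>V. adj E v u + (if u = v then 1 else 0)) * x u)"
    by (simp add: sum_distrib_right)
  also have "\<dots> = (\<Sum>u\<in>V. (real d + 1) * x u)"
    using col_sum[OF g r] by (intro sum.cong) auto
  also have "\<dots> = (real d + 1) * (\<Sum>u\<in>V. x u)" by (simp add: sum_distrib_left)
  finally show ?thesis .
qed

theorem lemma5:
  fixes V :: "'a set" and E :: "'a \<Rightarrow> 'a \<Rightarrow> bool" and n d :: nat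
  assumes "simple_graph V E" and "card V = n" and "regular V E d"
  shows "mG V E = real n / (real d + 1)"
proof -
  note g = assms(1) and r = assms(3)
  have fin: "finite V" using g by (simp add: simple_graph_def)
  define c where "c = 1 / (real d + 1)"
  define x0 where "x0 = (\<lambda>v. if v \<in> V then c else 0)"
  have A1: "AIx V E x0 v = 1" if "v \<in> V" for v
  proof -
    have "AIx V E x0 v = (\<Sum>u\<in>V. (adj E v u + (if u = v then 1 else 0)) * c)"
      unfolding AIx_def x0_def by (intro sum.cong) auto
    also have "\<dots> = (\<Sum>u\<in>V. adj E v u + (if u = v then 1 else 0)) * c"
      by (simp add: sum_distrib_right)
    also have "\<dots> = 1" using row_sum[OF g r that] by (simp add: c_def)
    finally show ?thesis .
  qed
  have inS: "x0 \<in> SOL V E"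
    unfolding SOL_def using A1 by (auto simp: x0_def c_def)
  have sx0: "(\<Sum>v\<in>V. x0 v) = real n / (real d + 1)"
    using assms(2) by (simp add: x0_def c_def)
  have low: "real n / (real d + 1) \<le> (\<Sum>v\<in>V. x v)" if "x \<in> SOL V E" for x
  proof -
    have "real n = (\<Sum>v\<in>V. (1::real))" using assms(2) by simp
    also have "\<dots> \<le> (\<Sum>v\<in>V. AIx V E x v)"
      using that by (intro sum_mono) (auto simp: SOL_def)
    also have "\<dots> = (real d + 1) * (\<Sum>u\<in>V. x u)" by (rule total[OF g r])
    finally show ?thesis by (simp add: divide_le_eq mult.commute)
  qed
  show ?thesis unfolding mG_def
    by (rule Least_equality) (use inS sx0 low in \<open>auto intro: image_eqI[where x=x0]\<close>)
qed

end
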